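(* Given any $M, K\in\mathbb{N}$ there exists a constant $0<c_{M,K}<1/2$ with the following property. For every $0<\epsilon<c_{M,K}$ there exists $C_{M,K}(\epsilon)>0$ such that for any collection $I_1,\dots,I_K$ of finite open intervals with associated rectangle $R := \prod_{j=1}^K I_j$ one has \[ \int_{R\setminus R^\epsilon}|p(x)|\,\mathrm{d}x \le C_{M,K}(\epsilon)\int_{R^\epsilon}|p(x)|\,\mathrm{d}x \] for every real polynomial $p$ of degree at most $M$ in $x=(x_1,\dots,x_K)$. Moreover, $\lim_{\epsilon\to0}C_{M,K}(\epsilon)=0$ for fixed $M,K$.
   Context: For $0<\epsilon<1/2$, the $\epsilon$-truncation of a finite open interval $I=(a,b)$ is $I^\epsilon := (a+\epsilon(b-a),\, b-\epsilon(b-a))$, and the $\epsilon$-truncation of $R=\prod_{j=1}^K I_j$ is $R^\epsilon := \prod_{j=1}^K I_j^\epsilon$. *)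

theory Defs
  imports "HOL-Analysis.Analysis"
begin

definition poly_deg_le :: "nat \<Rightarrow> (real^'n \<Rightarrow> real) \<Rightarrow> bool" where
  "poly_deg_le M p \<longleftrightarrow>
     (\<exists>c :: ('n \<Rightarrow> nat) \<Rightarrow> real.
        p = (\<lambda>x. \<Sum>\<alpha>\<in>{\<alpha>. (\<Sum>i\<in>UNIV. \<alpha> i) \<le> M}. c \<alpha> * (\<Prod>i\<in>UNIV. (x$i) ^ (\<alpha> i))))"

definition rect :: "real^'n \<Rightarrow> real^'n \<Rightarrow> (real^'n) set" where
  "rect a b = box a b"

definition rect_trunc :: "real \<Rightarrow> real^'n \<Rightarrow> real^'n \<Rightarrow> (real^'n) set" where
  "rect_trunc eps a b = box (a + eps *\<^sub>R (b - a)) (b - eps *\<^sub>R (b - a))"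

end

theory Submission imports Defs "HOL-Computational_Algebra.Polynomial" "HOL-Library.FuncSet"
begin

hide_const (open) Polynomial.content

definition idxs :: "nat \<Rightarrow> ('n::finite \<Rightarrow> nat) set" where
  "idxs M = {\<alpha>. (\<Sum>i\<in>UNIV. \<alpha> i) \<le> M}"

definition mnm :: "('n::finite \<Rightarrow> nat) \<Rightarrow> real^'n \<Rightarrow> real" where
  "mnm \<alpha> x = (\<Prod>i\<in>UNIV. (x$i) ^ (\<alpha> i))"

definition P :: "nat \<Rightarrow> (('n::finite \<Rightarrow> nat) \<Rightarrow> real) \<Rightarrow> real^'n \<Rightarrow> real" where
  "P M c x = (\<Sum>\<alpha>\<in>idxs M. c \<alpha> * mnm \<alpha> x)"

lemma idxs_le: "\<alpha> \<in> idxs M \<Longrightarrow> \<alpha> i \<le> M"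
  unfolding idxs_def using member_le_sum[of i UNIV \<alpha>] by auto

lemma finite_idxs: "finite (idxs M :: ('n::finite \<Rightarrow> nat) set)"
proof -
  have "idxs M \<subseteq> PiE UNIV (\<lambda>_::'n. {..M})"
    using idxs_le by (auto simp: PiE_def Pi_def)
  moreover have "finite (PiE UNIV (\<lambda>_::'n. {..M}))" by (intro finite_PiE) auto
  ultimately show ?thesis using finite_subset by blast
qed

lemma zero_idxs: "(\<lambda>_. 0) \<in> idxs M" by (simp add: idxs_def)

lemma poly_line:
  "poly (\<Sum>\<alpha>\<in>idxs M. smult (c \<alpha>) (\<Prod>i\<in>UNIV. [:x0$i, x$i - x0$i:] ^ (\<alpha> i))) t
   = P M c (x0 + t *\<^sub>R (x - x0))"
  by (simp add: P_def mnm_def poly_sum poly_prod algebra_simps)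

lemma zero_near_imp_zero:
  assumes d: "d > 0" and z: "\<And>y. y \<in> ball x0 d \<Longrightarrow> P M c y = 0"
  shows "P M c x = 0"
proof -
  define Q where "Q = (\<Sum>\<alpha>\<in>idxs M. smult (c \<alpha>) (\<Prod>i\<in>UNIV. [:x0$i, x$i - x0$i:] ^ (\<alpha> i)))"
  define r where "r = d / (norm (x - x0) + 1)"
  have n1: "norm (x - x0) + 1 > 0" by (smt (verit) norm_ge_zero)
  have r: "r > 0" unfolding r_def using d n1 by simp
  have "{0<..<r} \<subseteq> {t. poly Q t = 0}"
  proof
    fix t assume t: "t \<in> {0<..<r}"
    have "norm (t *\<^sub>R (x - x0)) = t * norm (x - x0)" using t by simp
    also have "\<dots> \<le> t * (norm (x - x0) + 1)" using t by (intro mult_left_mono) auto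
    also have "\<dots> < r * (norm (x - x0) + 1)" using t using n1 by (intro mult_strict_right_mono) auto
    also have "\<dots> = d" using n1 by (simp add: r_def)
    finally have "x0 + t *\<^sub>R (x - x0) \<in> ball x0 d" by (simp add: dist_norm)
    moreover have "poly Q t = P M c (x0 + t *\<^sub>R (x - x0))" unfolding Q_def by (rule poly_line)
    ultimately show "t \<in> {t. poly Q t = 0}" using z by simp
  qed
  moreover have "infinite {0<..<r}" using r by simp
  ultimately have "infinite {t. poly Q t = 0}" using finite_subset by blast
  then have "Q = 0" using poly_roots_finite by blast
  then have "poly Q 1 = 0" by simp
  moreover have "poly Q 1 = P M c (x0 + 1 *\<^sub>R (x - x0))" unfolding Q_def by (rule poly_line)
  ultimately show ?thesis by simp
qed

lemma geom_nat: "M * (\<Sum>k<n. (Suc M)^k) + 1 = (Suc M)^n"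
  by (induction n) (auto simp: algebra_simps)

lemma low_bound:
  fixes idx :: "'n::finite \<Rightarrow> nat"
  assumes inj: "inj idx" and le: "\<And>i. \<alpha> i \<le> M"
  shows "(\<Sum>i\<in>{i. idx i < m}. \<alpha> i * (Suc M)^idx i) < (Suc M)^m"
proof -
  have "(\<Sum>i\<in>{i. idx i < m}. \<alpha> i * (Suc M)^idx i) \<le> (\<Sum>i\<in>{i. idx i < m}. M * (Suc M)^idx i)"
    using le by (intro sum_mono mult_right_mono) auto
  also have "\<dots> = M * (\<Sum>i\<in>{i. idx i < m}. (Suc M)^idx i)" by (simp add: sum_distrib_left)
  also have "(\<Sum>i\<in>{i. idx i < m}. (Suc M)^idx i) = (\<Sum>k\<in>idx ` {i. idx i < m}. (Suc M)^k)"
    using inj by (subst sum.reindex) (auto simp: inj_on_def inj_def)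
  also have "\<dots> \<le> (\<Sum>k<m. (Suc M)^k)" by (intro sum_mono2) auto
  finally have "(\<Sum>i\<in>{i. idx i < m}. \<alpha> i * (Suc M)^idx i) \<le> M * (\<Sum>k<m. (Suc M)^k)"
    by (meson le_trans mult_le_mono2)
  then show ?thesis using geom_nat[of M m] by linarith
qed

lemma digit:
  fixes idx :: "'n::finite \<Rightarrow> nat"
  assumes inj: "inj idx" and le: "\<And>i. \<alpha> i \<le> M"
  shows "(\<Sum>i\<in>UNIV. \<alpha> i * (Suc M)^idx i) div (Suc M)^idx j mod Suc M = \<alpha> j"
proof -
  define B where "B = Suc M"
  define L where "L = {i. idx i < idx j}"
  define H where "H = {i. idx i > idx j}"
  have U: "UNIV = L \<union> ({j} \<union> H)" using inj by (auto simp: L_def H_def inj_def) (metis linorder_neqE_nat)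
  have d1: "L \<inter> ({j} \<union> H) = {}" "{j} \<inter> H = {}" by (auto simp: L_def H_def)
  have split: "(\<Sum>i\<in>UNIV. \<alpha> i * B^idx i) = (\<Sum>i\<in>L. \<alpha> i * B^idx i) + \<alpha> j * B^idx j + (\<Sum>i\<in>H. \<alpha> i * B^idx i)"
    apply (subst U) apply (subst sum.union_disjoint) apply (auto simp: L_def H_def)[3]
    apply (subst sum.union_disjoint) apply (auto simp: L_def H_def)[3]
    by simp
  have "B^(Suc (idx j)) dvd (\<Sum>i\<in>H. \<alpha> i * B^idx i)"
    by (intro dvd_sum dvd_mult le_imp_power_dvd) (auto simp: H_def)
  then obtain q where q: "(\<Sum>i\<in>H. \<alpha> i * B^idx i) = B^(Suc (idx j)) * q" by blast
  have low: "(\<Sum>i\<in>L. \<alpha> i * B^idx i) < B^idx j" unfolding L_def B_def by (rule low_bound[OF inj le])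
  have "(\<Sum>i\<in>UNIV. \<alpha> i * B^idx i) = (\<Sum>i\<in>L. \<alpha> i * B^idx i) + B^idx j * (\<alpha> j + B * q)"
    using split q by (simp add: algebra_simps)
  then have "(\<Sum>i\<in>UNIV. \<alpha> i * B^idx i) div B^idx j = \<alpha> j + B * q"
    using low by (simp add: B_def)
  moreover have "(\<alpha> j + B * q) mod B = \<alpha> j mod B" by (metis mod_mult_self2)
  moreover have "\<alpha> j mod B = \<alpha> j" using le[of j] by (simp add: B_def)
  ultimately show ?thesis by (simp add: B_def)
qed

lemma kron:
  assumes z: "\<And>x. P M c (x::real^'n::finite) = 0" and a: "\<alpha> \<in> idxs M"
  shows "c \<alpha> = 0"
proof -
  obtain idx :: "'n \<Rightarrow> nat" and n where "idx ` UNIV = {i. i < n}" "inj_on idx UNIV"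
    using finite_imp_inj_to_nat_seg[of "UNIV :: 'n set"] by auto
  then have inj: "inj idx" by simp
  define e where "e = (\<lambda>\<beta>::'n\<Rightarrow>nat. \<Sum>i\<in>UNIV. \<beta> i * (Suc M)^idx i)"
  have einj: "\<beta> = \<gamma>" if "\<beta> \<in> idxs M" "\<gamma> \<in> idxs M" "e \<beta> = e \<gamma>" for \<beta> \<gamma>
  proof
    fix j
    have "\<beta> j = e \<beta> div (Suc M)^idx j mod Suc M" unfolding e_def
      using digit[OF inj, of \<beta> M j] idxs_le[OF that(1)] by simp
    also have "\<dots> = \<gamma> j"
      using digit[OF inj, of \<gamma> M j] idxs_le[OF that(2)] that(3) by (simp add: e_def)
    finally show "\<beta> j = \<gamma> j" .
  qed
  define Q where "Q = (\<Sum>\<beta>\<in>idxs M. monom (c \<beta>) (e \<beta>))"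
  have "poly Q t = 0" for t
  proof -
    have m: "mnm \<beta> (\<chi> i. t ^ ((Suc M)^idx i)) = t ^ e \<beta>" for \<beta>
      unfolding mnm_def e_def power_sum by (simp add: power_mult[symmetric] mult.commute)
    have "poly Q t = P M c (\<chi> i. t ^ ((Suc M)^idx i))"
      unfolding Q_def P_def by (simp add: poly_sum poly_monom m)
    then show ?thesis using z by simp
  qed
  then have "Q = 0" using poly_all_0_iff_0 by blast
  then have "0 = coeff Q (e \<alpha>)" by simp
  also have "\<dots> = (\<Sum>\<beta>\<in>idxs M. if \<beta> = \<alpha> then c \<beta> else 0)"
    unfolding Q_def coeff_sum coeff_monom using einj a by (intro sum.cong) auto
  also have "\<dots> = c \<alpha>" using a by (simp add: sum.delta[OF finite_idxs])
  finally show ?thesis by simp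
qed

lemma contP: "continuous_on S (P M c)"
  unfolding P_def mnm_def by (intro continuous_intros)

lemma mnm_le1:
  assumes "\<And>i. 0 \<le> y$i \<and> y$i \<le> 1"
  shows "\<bar>mnm \<alpha> y\<bar> \<le> 1"
  unfolding mnm_def abs_prod using assms
  by (intro prod_le_1) (auto simp: power_abs intro: power_le_one)

lemma P_bound:
  assumes "\<And>i. 0 \<le> y$i \<and> y$i \<le> 1"
  shows "\<bar>P M c y\<bar> \<le> (\<Sum>\<alpha>\<in>idxs M. \<bar>c \<alpha>\<bar>)"
proof -
  have "\<bar>P M c y\<bar> \<le> (\<Sum>\<alpha>\<in>idxs M. \<bar>c \<alpha> * mnm \<alpha> y\<bar>)" unfolding P_def by (rule sum_abs)
  also have "\<dots> \<le> (\<Sum>\<alpha>\<in>idxs M. \<bar>c \<alpha>\<bar>)"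
    using mnm_le1[OF assms] by (intro sum_mono) (auto simp: abs_mult intro: mult_left_le)
  finally show ?thesis .
qed

lemma P_diff: "P M d y - P M c y = P M (\<lambda>\<alpha>. d \<alpha> - c \<alpha>) y"
  unfolding P_def by (simp add: sum_subtractf algebra_simps)

definition lo :: "real^'n::finite" where "lo = (\<chi> i. 1/4)"
definition hi :: "real^'n::finite" where "hi = (\<chi> i. 3/4)"

lemma cbox_lohi: "y \<in> cbox lo hi \<Longrightarrow> 0 \<le> y$i \<and> y$i \<le> 1"
  by (auto simp: mem_box_cart lo_def hi_def dest: spec[of _ i])

lemma indep:
  assumes z: "\<And>y. y \<in> cbox lo hi \<Longrightarrow> P M c (y::real^'n::finite) = 0" and a: "\<alpha> \<in> idxs M"
  shows "c \<alpha> = 0"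
proof (rule kron[OF _ a])
  fix x :: "real^'n"
  show "P M c x = 0"
  proof (rule zero_near_imp_zero[of "1/4" "\<chi> i. 1/2"])
    fix y assume y: "y \<in> ball (\<chi> i. 1/2 :: real^'n) (1/4)"
    have "y \<in> cbox lo hi" unfolding mem_box_cart lo_def hi_def
    proof (intro allI conjI)
      fix i
      have "\<bar>(y - (\<chi> i. 1/2))$i\<bar> \<le> norm (y - (\<chi> i. 1/2 :: real^'n))" by (rule component_le_norm_cart)
      also have "\<dots> < 1/4" using y by (simp add: dist_norm norm_minus_commute)
      finally have "\<bar>y$i - 1/2\<bar> < 1/4" by simp
      then have "1/4 < y$i" "y$i < 3/4" unfolding abs_less_iff by linarith+
      then show "(\<chi> i. 1/4 :: real^'n)$i \<le> y$i" "y$i \<le> (\<chi> i. 3/4 :: real^'n)$i" by simp_all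
    qed
    then show "P M c y = 0" by (rule z)
  qed simp
qed

definition F :: "nat \<Rightarrow> (('n::finite \<Rightarrow> nat) \<Rightarrow> real) \<Rightarrow> real" where
  "F M c = integral (cbox (lo::real^'n) hi) (\<lambda>y. \<bar>P M c y\<bar>)"

lemma intP: "(\<lambda>y. \<bar>P M c y\<bar>) integrable_on cbox a b"
  by (intro integrable_continuous continuous_intros contP)

lemma F_nonneg: "F M c \<ge> 0"
  unfolding F_def by (intro integral_nonneg intP) auto

lemma F_lip: "\<bar>F M d - F M (c::('n::finite \<Rightarrow> nat) \<Rightarrow> real)\<bar>
    \<le> content (cbox (lo::real^'n) hi) * (\<Sum>\<alpha>\<in>idxs M. \<bar>d \<alpha> - c \<alpha>\<bar>)"
proof -
  have "F M d - F M c = integral (cbox (lo::real^'n) hi) (\<lambda>y. \<bar>P M d y\<bar> - \<bar>P M c y\<bar>)"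
    unfolding F_def by (rule integral_diff[symmetric]) (auto intro: intP)
  also have "norm \<dots> \<le> integral (cbox (lo::real^'n) hi) (\<lambda>y. (\<Sum>\<alpha>\<in>idxs M. \<bar>d \<alpha> - c \<alpha>\<bar>))"
  proof (rule integral_norm_bound_integral)
    show "(\<lambda>y. \<bar>P M d y\<bar> - \<bar>P M c y\<bar>) integrable_on cbox lo hi" by (intro integrable_diff intP)
    fix y :: "real^'n" assume y: "y \<in> cbox lo hi"
    have "norm (\<bar>P M d y\<bar> - \<bar>P M c y\<bar>) \<le> \<bar>P M d y - P M c y\<bar>" by simp
    also have "\<dots> \<le> (\<Sum>\<alpha>\<in>idxs M. \<bar>d \<alpha> - c \<alpha>\<bar>)" unfolding P_diff by (rule P_bound[OF cbox_lohi[OF y]])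
    finally show "norm (\<bar>P M d y\<bar> - \<bar>P M c y\<bar>) \<le> (\<Sum>\<alpha>\<in>idxs M. \<bar>d \<alpha> - c \<alpha>\<bar>)" .
  qed (rule integrable_const)
  finally show ?thesis by simp
qed

lemma F_cont: "continuous_on S (F M :: (('n::finite \<Rightarrow> nat) \<Rightarrow> real) \<Rightarrow> real)"
proof (rule continuous_at_imp_continuous_on, intro ballI)
  fix c :: "('n \<Rightarrow> nat) \<Rightarrow> real"
  define K where "K = content (cbox (lo::real^'n) hi)"
  define G where "G = (\<lambda>d::('n \<Rightarrow> nat) \<Rightarrow> real. K * (\<Sum>\<alpha>\<in>idxs M. \<bar>d \<alpha> - c \<alpha>\<bar>))"
  have "continuous_on UNIV G" unfolding G_def
    by (intro continuous_on_mult continuous_on_const continuous_on_sum continuous_on_rabs continuous_on_diff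
        continuous_on_product_coordinates)
  then have "isCont G c" by (simp add: continuous_on_eq_continuous_at)
  then have "(G \<longlongrightarrow> 0) (at c)" by (simp add: isCont_def G_def)
  then have "((\<lambda>d. F M d - F M c) \<longlongrightarrow> 0) (at c)"
    by (rule Lim_null_comparison[rotated]) (auto simp: G_def K_def intro!: always_eventually F_lip)
  then have "(F M \<longlongrightarrow> F M c) (at c)" by (rule LIM_zero_cancel)
  then show "isCont (F M) c" by (simp add: isCont_def)
qed

lemma key:
  "\<exists>D>0. \<forall>c. (\<Sum>\<alpha>\<in>idxs M. \<bar>c \<alpha>\<bar>) \<le> D * F M (c::('n::finite \<Rightarrow> nat) \<Rightarrow> real)"
proof -
  define A where "A = (idxs M :: ('n \<Rightarrow> nat) set)"
  define I where "I = (\<lambda>\<alpha>::'n\<Rightarrow>nat. if \<alpha> \<in> A then {-1..1} else {0::real})"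
  define S where "S = PiE UNIV I \<inter> {c. (\<Sum>\<alpha>\<in>A. \<bar>c \<alpha>\<bar>) = 1}"
  have "compactin (product_topology (\<lambda>_. euclidean) UNIV) (PiE UNIV I)"
    by (subst compactin_PiE) (auto simp: I_def)
  then have cX: "compact (PiE UNIV I)" by (simp add: euclidean_product_topology)
  have "closed {c::('n \<Rightarrow> nat) \<Rightarrow> real. (\<Sum>\<alpha>\<in>A. \<bar>c \<alpha>\<bar>) = 1}"
    by (intro closed_Collect_eq continuous_on_sum continuous_on_rabs continuous_on_const
        continuous_on_product_coordinates)
  with cX have cS: "compact S" unfolding S_def by blast
  have z: "(\<lambda>_. 0) \<in> A" unfolding A_def by (rule zero_idxs)
  have fA: "finite A" unfolding A_def by (rule finite_idxs)
  have s1: "(\<Sum>\<alpha>\<in>A. if \<alpha> = (\<lambda>_. 0) then (1::real) else 0) = 1"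
    using z sum.delta[OF fA, of "\<lambda>_. 0" "\<lambda>_. 1::real"] by simp
  have "(\<lambda>\<alpha>. if \<alpha> = (\<lambda>_. 0) then 1 else 0) \<in> S"
    using z s1 unfolding S_def I_def
    by (auto simp: PiE_def Pi_def if_distrib sum.delta cong: if_cong)
  then have ne: "S \<noteq> {}" by blast
  obtain c0 where c0: "c0 \<in> S" and min: "\<And>c. c \<in> S \<Longrightarrow> F M c0 \<le> F M c"
    using continuous_attains_inf[OF cS ne F_cont] by blast
  have pos: "F M c0 > 0"
  proof (rule ccontr)
    assume "\<not> F M c0 > 0"
    then have "F M c0 = 0" using F_nonneg[of M c0] by linarith
    then have "integral (cbox (lo::real^'n) hi) (\<lambda>y. \<bar>P M c0 y\<bar>) = 0" by (simp add: F_def)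
    moreover have bne: "box (lo::real^'n) hi \<noteq> {}"
    proof -
      have "(\<chi> i. 1/2) \<in> box (lo::real^'n) hi" by (simp add: mem_box_cart lo_def hi_def)
      then show ?thesis by blast
    qed
    moreover have cont: "continuous_on (cbox (lo::real^'n) hi) (\<lambda>y. \<bar>P M c0 y\<bar>)"
      by (intro continuous_on_rabs contP)
    ultimately have "\<forall>y\<in>cbox (lo::real^'n) hi. \<bar>P M c0 y\<bar> = 0"
      using integral_cbox_eq_0_iff[OF cont bne] by simp
    then have "\<forall>\<alpha>\<in>A. c0 \<alpha> = 0" unfolding A_def using indep[of M c0] by auto
    then have "(\<Sum>\<alpha>\<in>A. \<bar>c0 \<alpha>\<bar>) = 0" by simp
    then show False using c0 by (simp add: S_def)
  qed
  show ?thesis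
  proof (intro exI[of _ "1 / F M c0"] conjI allI)
    show "1 / F M c0 > 0" using pos by simp
    fix c :: "('n \<Rightarrow> nat) \<Rightarrow> real"
    define s where "s = (\<Sum>\<alpha>\<in>A. \<bar>c \<alpha>\<bar>)"
    show "(\<Sum>\<alpha>\<in>idxs M. \<bar>c \<alpha>\<bar>) \<le> 1 / F M c0 * F M c"
    proof (cases "s = 0")
      case True
      then show ?thesis using pos F_nonneg[of M c] by (simp add: s_def A_def)
    next
      case False
      then have sp: "s > 0" unfolding s_def by (metis sum_abs_ge_zero order_le_less)
      define c' where "c' = (\<lambda>\<alpha>. if \<alpha> \<in> A then c \<alpha> / s else 0)"
      have "c' \<in> S"
      proof -
        have "\<bar>c \<alpha>\<bar> \<le> s" if "\<alpha> \<in> A" for \<alpha>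
          unfolding s_def using that finite_idxs[of M] by (intro member_le_sum) (auto simp: A_def)
        then have "c' \<in> PiE UNIV I" using sp
          by (auto simp: c'_def I_def PiE_def Pi_def abs_le_iff divide_le_eq le_divide_eq) (meson minus_le_iff)
        moreover have "(\<Sum>\<alpha>\<in>A. \<bar>c' \<alpha>\<bar>) = (\<Sum>\<alpha>\<in>A. \<bar>c \<alpha>\<bar>) / s"
          unfolding sum_divide_distrib using sp by (intro sum.cong) (auto simp: c'_def)
        ultimately show ?thesis using sp by (simp add: S_def s_def)
      qed
      then have le: "F M c0 \<le> F M c'" by (rule min)
      have "P M c' y = (1/s) * P M c y" for y :: "real^'n"
        unfolding P_def sum_distrib_left by (intro sum.cong) (auto simp: c'_def A_def)
      then have "F M c' = (1/s) * F M c" using sp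
        by (simp add: F_def abs_mult integral_cmul[of _ "1/s", simplified])
      then have "F M c = s * F M c'" using sp by (simp add: field_simps)
      then have "F M c0 * s \<le> F M c" using le sp by (simp add: mult_right_mono mult.commute)
      then have "s \<le> F M c / F M c0" using pos by (simp add: field_simps)
      then show ?thesis by (simp add: s_def A_def)
    qed
  qed
qed

lemma mnm_affine:
  "mnm \<alpha> (\<chi> i. a$i + h$i * y$i) =
   (\<Sum>g\<in>PiE UNIV (\<lambda>i. {..\<alpha> i}). (\<Prod>i\<in>UNIV. of_nat (\<alpha> i choose g i) * (h$i)^(g i) * (a$i)^(\<alpha> i - g i)) * mnm g (y::real^'n::finite))"
proof -
  have "mnm \<alpha> (\<chi> i. a$i + h$i * y$i) = (\<Prod>i\<in>UNIV. (h$i * y$i + a$i) ^ \<alpha> i)"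
    by (simp add: mnm_def add.commute)
  also have "\<dots> = (\<Prod>i\<in>UNIV. \<Sum>k\<le>\<alpha> i. (of_nat (\<alpha> i choose k) * (h$i)^k * (a$i)^(\<alpha> i - k)) * (y$i)^k)"
    by (intro prod.cong refl, subst binomial_ring) (simp add: power_mult_distrib algebra_simps)
  also have "\<dots> = (\<Sum>g\<in>PiE UNIV (\<lambda>i. {..\<alpha> i}). \<Prod>i\<in>UNIV. (of_nat (\<alpha> i choose g i) * (h$i)^(g i) * (a$i)^(\<alpha> i - g i)) * (y$i)^(g i))"
    by (rule prod_sum_PiE) auto
  also have "\<dots> = (\<Sum>g\<in>PiE UNIV (\<lambda>i. {..\<alpha> i}). (\<Prod>i\<in>UNIV. of_nat (\<alpha> i choose g i) * (h$i)^(g i) * (a$i)^(\<alpha> i - g i)) * mnm g y)"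
    by (simp add: mnm_def prod.distrib)
  finally show ?thesis .
qed

lemma PiE_sub_idxs:
  assumes "\<alpha> \<in> idxs M"
  shows "PiE UNIV (\<lambda>i. {..\<alpha> i}) \<subseteq> (idxs M :: ('n::finite \<Rightarrow> nat) set)"
proof
  fix g assume g: "g \<in> PiE (UNIV::'n set) (\<lambda>i. {..\<alpha> i})"
  then have "(\<Sum>i\<in>UNIV. g i) \<le> (\<Sum>i\<in>UNIV. \<alpha> i)" by (intro sum_mono) (auto simp: PiE_def Pi_def)
  then show "g \<in> idxs M" using assms by (simp add: idxs_def)
qed

lemma affine_poly: "\<exists>c'. \<forall>y. P M c (\<chi> i. a$i + h$i * y$i) = P M c' (y::real^'n::finite)"
proof -
  define A where "A = (idxs M :: ('n \<Rightarrow> nat) set)"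
  define G where "G = (\<lambda>\<alpha>::'n\<Rightarrow>nat. PiE UNIV (\<lambda>i. {..\<alpha> i}))"
  define W where "W = (\<lambda>\<alpha> g. (\<Prod>i\<in>UNIV. of_nat (\<alpha> i choose g i) * (h$i)^(g i) * (a$i)^(\<alpha> i - g i) :: real))"
  define c' where "c' = (\<lambda>g. \<Sum>\<alpha>\<in>A. if g \<in> G \<alpha> then c \<alpha> * W \<alpha> g else 0)"
  have fA: "finite A" unfolding A_def by (rule finite_idxs)
  show ?thesis
  proof (intro exI allI)
    fix y :: "real^'n"
    have "P M c (\<chi> i. a$i + h$i * y$i) = (\<Sum>\<alpha>\<in>A. c \<alpha> * (\<Sum>g\<in>G \<alpha>. W \<alpha> g * mnm g y))"
      unfolding P_def A_def G_def W_def mnm_affine ..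
    also have "\<dots> = (\<Sum>\<alpha>\<in>A. \<Sum>g\<in>A. (if g \<in> G \<alpha> then c \<alpha> * W \<alpha> g else 0) * mnm g y)"
    proof (rule sum.cong[OF refl])
      fix \<alpha> assume a: "\<alpha> \<in> A"
      have sub: "A \<inter> G \<alpha> = G \<alpha>" using PiE_sub_idxs[of \<alpha> M] a by (auto simp: A_def G_def)
      have "c \<alpha> * (\<Sum>g\<in>G \<alpha>. W \<alpha> g * mnm g y) = (\<Sum>g\<in>A \<inter> G \<alpha>. c \<alpha> * W \<alpha> g * mnm g y)"
        unfolding sub sum_distrib_left by (simp add: mult.assoc)
      also have "\<dots> = (\<Sum>g\<in>A. if g \<in> G \<alpha> then c \<alpha> * W \<alpha> g * mnm g y else 0)"
        by (rule sum.inter_restrict[OF fA])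
      also have "\<dots> = (\<Sum>g\<in>A. (if g \<in> G \<alpha> then c \<alpha> * W \<alpha> g else 0) * mnm g y)"
        by (intro sum.cong refl) simp
      finally show "c \<alpha> * (\<Sum>g\<in>G \<alpha>. W \<alpha> g * mnm g y) = (\<Sum>g\<in>A. (if g \<in> G \<alpha> then c \<alpha> * W \<alpha> g else 0) * mnm g y)" .
    qed
    also have "\<dots> = (\<Sum>g\<in>A. \<Sum>\<alpha>\<in>A. (if g \<in> G \<alpha> then c \<alpha> * W \<alpha> g else 0) * mnm g y)"
      by (rule sum.swap)
    also have "\<dots> = P M c' y"
      unfolding P_def A_def c'_def sum_distrib_right ..
    finally show "P M c (\<chi> i. a$i + h$i * y$i) = P M c' y" .
  qed
qed

lemma pow_lt1: "0 < e \<Longrightarrow> e < 1/4 \<Longrightarrow> (1 - 2*e::real) ^ CARD('n::finite) < 1"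
proof -
  assume e: "0 < e" "e < 1/4"
  have "CARD('n) > 0" by simp
  then obtain k where k: "CARD('n) = Suc k" using gr0_implies_Suc by blast
  have "(1 - 2*e) ^ Suc k < 1" using e by (intro power_Suc_less_one) auto
  then show ?thesis using k by simp
qed

lemma main_ineq:
  fixes a b :: "real^'n::finite" and p :: "real^'n \<Rightarrow> real"
  assumes Dk: "\<And>c. (\<Sum>\<alpha>\<in>idxs M. \<bar>c \<alpha>\<bar>) \<le> D * F M (c::('n \<Rightarrow> nat) \<Rightarrow> real)" and Dpos: "D > 0"
    and e: "0 < eps" "eps < 1/4" and ab: "\<forall>i. a$i < b$i" and pd: "poly_deg_le M p"
  shows "integral (rect a b - rect_trunc eps a b) (\<lambda>x. \<bar>p x\<bar>)
           \<le> D * (1 - (1 - 2*eps) ^ CARD('n)) * integral (rect_trunc eps a b) (\<lambda>x. \<bar>p x\<bar>)"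
proof -
  obtain coef where "p = (\<lambda>x. \<Sum>\<alpha>\<in>{\<alpha>. (\<Sum>i\<in>UNIV. \<alpha> i) \<le> M}. coef \<alpha> * (\<Prod>i\<in>UNIV. (x$i) ^ (\<alpha> i)))"
    using pd unfolding poly_deg_le_def by blast
  then have pP: "p = P M coef" by (simp add: fun_eq_iff P_def idxs_def mnm_def)
  define h where "h = b - a"
  have hpos: "h$i > 0" for i using ab by (simp add: h_def)
  define T where "T = (\<lambda>y::real^'n. \<chi> i. a$i + h$i * y$i)"
  obtain c' where c': "\<And>y. p (T y) = P M c' y"
    using affine_poly[of M coef a h] unfolding pP T_def by blast
  define Re where "Re = rect_trunc eps a b"
  have Re: "Re = box (a + eps *\<^sub>R h) (b - eps *\<^sub>R h)" by (simp add: Re_def rect_trunc_def h_def)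
  define E where "E = cbox (\<chi> i. a$i + h$i/4) (\<chi> i. a$i + 3*h$i/4)"
  have ER: "E \<subseteq> Re"
  proof
    fix x assume "x \<in> E"
    then have "a$i + h$i/4 \<le> x$i \<and> x$i \<le> a$i + 3*h$i/4" for i by (simp add: E_def mem_box_cart)
    note xi = this
    show "x \<in> Re" unfolding Re mem_box_cart
    proof (intro allI conjI)
      fix i
      have 2: "eps * h$i < 1/4 * h$i" using hpos[of i] e by (intro mult_strict_right_mono) auto
      have hb: "b$i = a$i + h$i" by (simp add: h_def)
      show "(a + eps *\<^sub>R h)$i < x$i" using xi[of i] 2 by simp
      show "x$i < (b - eps *\<^sub>R h)$i" using xi[of i] 2 hb by simp
    qed
  qed
  have contp: "continuous_on S (\<lambda>x. \<bar>p x\<bar>)" for S unfolding pP by (intro continuous_on_rabs contP)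
  have intc: "(\<lambda>x. \<bar>p x\<bar>) integrable_on cbox u v" for u v by (intro integrable_continuous contp)
  have intb: "(\<lambda>x. \<bar>p x\<bar>) integrable_on box u v" for u v using intc integrable_on_open_interval by blast
  define Ph where "Ph = (\<Prod>i\<in>UNIV. h$i)"
  have Php: "Ph > 0" unfolding Ph_def using hpos by (intro prod_pos) auto
  have intE: "integral E (\<lambda>x. \<bar>p x\<bar>) = Ph * F M c'"
  proof -
    define a' where "a' = (\<chi> i. h$i/4)"
    define b' where "b' = (\<chi> i. 3*h$i/4)"
    define f where "f = (\<lambda>z. \<bar>p (a + z)\<bar>)"
    have "(f has_integral integral (cbox a' b') f) (cbox a' b')"
      unfolding f_def pP P_def mnm_def by (intro integrable_integral integrable_continuous continuous_intros)
    from has_integral_stretch_cart[OF this, of "\<lambda>k. h$k"] hpos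
    have st: "((\<lambda>x. f (\<chi> k. h$k * x$k)) has_integral integral (cbox a' b') f /\<^sub>R \<bar>Ph\<bar>)
          ((\<lambda>x. \<chi> k. x$k / h$k) ` cbox a' b')" unfolding Ph_def by (metis less_irrefl)
    have img: "(\<lambda>x. \<chi> k. x$k / h$k) ` cbox a' b' = cbox lo hi"
    proof
      show "(\<lambda>x. \<chi> k. x$k / h$k) ` cbox a' b' \<subseteq> cbox lo hi"
        using hpos by (auto simp: mem_box_cart a'_def b'_def lo_def hi_def field_simps)
      show "cbox lo hi \<subseteq> (\<lambda>x. \<chi> k. x$k / h$k) ` cbox a' b'"
      proof
        fix y :: "real^'n" assume y: "y \<in> cbox lo hi"
        have "(\<chi> k. h$k * y$k) \<in> cbox a' b'"
          using y hpos by (auto simp: mem_box_cart a'_def b'_def lo_def hi_def field_simps)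
        moreover have "y = (\<lambda>x. \<chi> k. x$k / h$k) (\<chi> k. h$k * y$k)"
          using hpos by (simp add: vec_eq_iff) (metis less_irrefl)
        ultimately show "y \<in> (\<lambda>x. \<chi> k. x$k / h$k) ` cbox a' b'" by blast
      qed
    qed
    have fe: "f (\<chi> k. h$k * x$k) = \<bar>P M c' x\<bar>" for x
      unfolding f_def c'[symmetric] T_def by (simp add: vec_eq_iff plus_vec_def)
    have "F M c' = integral (cbox a' b') f / Ph"
      using st unfolding img fe F_def using Php by (simp add: integral_unique divide_inverse mult.commute)
    moreover have "integral (cbox a' b') f = integral E (\<lambda>x. \<bar>p x\<bar>)"
    proof -
      have "integral (cbox a' b') f = integral (cbox a' b') ((\<lambda>x. \<bar>p x\<bar>) \<circ> ((+) a))"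
        by (simp add: f_def o_def)
      also have "\<dots> = integral (cbox (a' + a) (b' + a)) (\<lambda>x. \<bar>p x\<bar>)" by (rule integral_shift_cbox_plus)
      also have "cbox (a' + a) (b' + a) = E" unfolding E_def a'_def b'_def
        by (simp add: vec_eq_iff plus_vec_def add.commute)
      finally show ?thesis .
    qed
    ultimately show ?thesis using Php by simp
  qed
  define S0 where "S0 = D * integral Re (\<lambda>x. \<bar>p x\<bar>) / Ph"
  have "integral E (\<lambda>x. \<bar>p x\<bar>) \<le> integral Re (\<lambda>x. \<bar>p x\<bar>)"
    unfolding Re by (rule integral_subset_le[OF ER[unfolded Re]]) (auto simp: E_def intc intb)
  have ptw: "\<bar>p x\<bar> \<le> S0" if x: "x \<in> rect a b" for x
  proof -
    define y where "y = (\<chi> i. (x$i - a$i) / h$i)"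
    have Ty: "T y = x" using hpos by (simp add: T_def y_def vec_eq_iff) (metis less_irrefl)
    have y01: "0 \<le> y$i \<and> y$i \<le> 1" for i
      using x hpos[of i] by (auto simp: y_def rect_def mem_box_cart h_def field_simps dest: spec[of _ i])
    have "\<bar>p x\<bar> = \<bar>P M c' y\<bar>" using c'[of y] Ty by simp
    also have "\<dots> \<le> (\<Sum>\<alpha>\<in>idxs M. \<bar>c' \<alpha>\<bar>)" by (rule P_bound[OF y01])
    also have "\<dots> \<le> D * F M c'" by (rule Dk)
    also have "\<dots> = D * integral E (\<lambda>x. \<bar>p x\<bar>) / Ph" using intE Php by simp
    also have "\<dots> \<le> S0" unfolding S0_def using Php Dpos \<open>integral E _ \<le> _\<close>
      by (intro divide_right_mono mult_left_mono) auto
    finally show ?thesis .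
  qed
  have ReR: "Re \<subseteq> rect a b"
  proof
    fix x assume "x \<in> Re"
    then have xi: "(a + eps *\<^sub>R h)$i < x$i \<and> x$i < (b - eps *\<^sub>R h)$i" for i unfolding Re mem_box_cart by blast
    show "x \<in> rect a b" unfolding rect_def mem_box_cart
    proof (intro allI conjI)
      fix i
      have 2: "0 < eps * h$i" using hpos[of i] e by simp
      show "a$i < x$i" using xi[of i] 2 by simp
      show "x$i < b$i" using xi[of i] 2 by simp
    qed
  qed
  have Rene: "Re \<noteq> {}"
  proof -
    have "(\<chi> i. a$i + h$i/2) \<in> E" unfolding E_def mem_box_cart using hpos by (simp add: less_imp_le)
    then show ?thesis using ER by blast
  qed
  have hi1: "((\<lambda>x. \<bar>p x\<bar>) has_integral integral (rect a b) (\<lambda>x. \<bar>p x\<bar>)) (rect a b)"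
    unfolding rect_def by (intro integrable_integral intb)
  have hi2: "((\<lambda>x. \<bar>p x\<bar>) has_integral integral Re (\<lambda>x. \<bar>p x\<bar>)) Re"
    unfolding Re by (intro integrable_integral intb)
  have int_d: "(\<lambda>x. \<bar>p x\<bar>) integrable_on (rect a b - Re)"
    by (rule integrable_setdiff[OF hi1 hi2]) (use ReR in auto)
  have ci1: "((\<lambda>x. S0) has_integral integral (rect a b) (\<lambda>x. S0)) (rect a b)"
    unfolding rect_def by (intro integrable_integral) (simp add: integrable_on_open_interval integrable_const)
  have ci2: "((\<lambda>x. S0) has_integral integral Re (\<lambda>x. S0)) Re"
    unfolding Re by (intro integrable_integral) (simp add: integrable_on_open_interval integrable_const)
  have "integral (rect a b - Re) (\<lambda>x. \<bar>p x\<bar>) \<le> integral (rect a b - Re) (\<lambda>x. S0)"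
    by (rule integral_le[OF int_d integrable_setdiff[OF ci1 ci2]]) (use ReR ptw in auto)
  also have "\<dots> = integral (rect a b) (\<lambda>x. S0) - integral Re (\<lambda>x. S0)"
    by (rule integral_setdiff) (use ci1 ci2 ReR in auto)
  also have "integral (rect a b) (\<lambda>x. S0) = Ph * S0"
  proof -
    have "cbox a b \<noteq> {}" using ab by (auto simp: box_ne_empty cart_eq_inner_axis less_imp_le Basis_vec_def)
    then show ?thesis unfolding rect_def integral_open_interval
      by (simp add: content_cbox_cart Ph_def h_def)
  qed
  also have "integral Re (\<lambda>x. S0) = (1 - 2*eps) ^ CARD('n) * Ph * S0"
  proof -
    have ne: "cbox (a + eps *\<^sub>R h) (b - eps *\<^sub>R h) \<noteq> {}" using Rene Re box_subset_cbox by blast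
    have "(\<Prod>i\<in>UNIV. (b - eps *\<^sub>R h)$i - (a + eps *\<^sub>R h)$i) = (\<Prod>i\<in>UNIV. (1 - 2*eps) * h$i)"
      by (intro prod.cong) (auto simp: h_def algebra_simps)
    also have "\<dots> = (1 - 2*eps) ^ CARD('n) * Ph" by (simp add: prod.distrib Ph_def)
    finally show ?thesis unfolding Re integral_open_interval using ne
      by (simp add: content_cbox_cart)
  qed
  also have "Ph * S0 - (1 - 2*eps) ^ CARD('n) * Ph * S0 = D * (1 - (1 - 2*eps) ^ CARD('n)) * integral Re (\<lambda>x. \<bar>p x\<bar>)"
    using Php unfolding S0_def by (simp add: field_simps)
  finally show ?thesis unfolding Re_def .
qed

theorem lemma10p1:
  fixes M :: nat
  shows "\<exists>c::real. 0 < c \<and> c < 1/2 \<and>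
    (\<exists>C :: real \<Rightarrow> real.
       (\<forall>eps. 0 < eps \<and> eps < c \<longrightarrow>
          C eps > 0 \<and>
          (\<forall>(a::real^'n) b. (\<forall>i. a$i < b$i) \<longrightarrow>
             (\<forall>p. poly_deg_le M p \<longrightarrow>
                integral (rect a b - rect_trunc eps a b) (\<lambda>x. \<bar>p x\<bar>)
                  \<le> C eps * integral (rect_trunc eps a b) (\<lambda>x. \<bar>p x\<bar>))))
       \<and> (C \<longlongrightarrow> 0) (at_right 0))"
proof -
  obtain D where Dpos: "D > 0" and Dk: "\<And>c. (\<Sum>\<alpha>\<in>idxs M. \<bar>c \<alpha>\<bar>) \<le> D * F M (c::('n \<Rightarrow> nat) \<Rightarrow> real)"
    using key[of M] by blast
  define K where "K = CARD('n)"
  define C where "C = (\<lambda>e::real. D * (1 - (1 - 2*e) ^ K))"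
  have main: "integral (rect a b - rect_trunc eps a b) (\<lambda>x. \<bar>p x\<bar>)
                  \<le> C eps * integral (rect_trunc eps a b) (\<lambda>x. \<bar>p x\<bar>)"
    if e: "0 < eps" "eps < 1/4" and ab: "\<forall>i. (a::real^'n)$i < b$i" and pd: "poly_deg_le M p" for eps a b p
    using main_ineq[OF Dk Dpos e ab pd] by (simp add: C_def K_def)
  have lim: "(C \<longlongrightarrow> 0) (at_right 0)"
  proof -
    have "((\<lambda>e::real. D * (1 - (1 - 2*e) ^ K)) \<longlongrightarrow> D * (1 - (1 - 2*0) ^ K)) (at_right 0)"
      by (intro tendsto_intros)
    then show ?thesis by (simp add: C_def)
  qed
  have P1: "\<forall>eps. 0 < eps \<and> eps < 1/4 \<longrightarrow>
          C eps > 0 \<and>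
          (\<forall>(a::real^'n) b. (\<forall>i. a$i < b$i) \<longrightarrow>
             (\<forall>p. poly_deg_le M p \<longrightarrow>
                integral (rect a b - rect_trunc eps a b) (\<lambda>x. \<bar>p x\<bar>)
                  \<le> C eps * integral (rect_trunc eps a b) (\<lambda>x. \<bar>p x\<bar>)))"
  proof (intro allI impI conjI)
    fix eps :: real assume e: "0 < eps \<and> eps < 1/4"
    have "(1 - 2*eps) ^ CARD('n) < 1" using pow_lt1[where 'n='n, of eps] e by blast
    then show "C eps > 0" using Dpos unfolding C_def K_def by simp
    fix a b :: "real^'n" and p :: "real^'n \<Rightarrow> real"
    assume "\<forall>i. a$i < b$i" "poly_deg_le M p"
    then show "integral (rect a b - rect_trunc eps a b) (\<lambda>x. \<bar>p x\<bar>)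
                  \<le> C eps * integral (rect_trunc eps a b) (\<lambda>x. \<bar>p x\<bar>)" using main e by blast
  qed
  show ?thesis
    apply (rule exI[of _ "1/4"])
    apply (intro conjI)
      apply simp
     apply simp
    apply (rule exI[of _ C])
    by (rule conjI[OF P1 lim])
qed

end
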